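(* For every agent $k$ and every $n\ge0$, $\|e_{k,n}\|\le B_e$ and $\|\widehat e_{k,n}\|\le B_e$, where $B_e:=\frac{1}{1-\lambda\gamma}\Big(\lambda+\frac{1-\lambda}{1-\gamma/b_\epsilon}\Big)$.
   Context: Constants $\lambda,\gamma\in(0,1)$ and $b_\epsilon>0$ with $\gamma<b_\epsilon$. For each agent $k$, importance ratios $\rho_{k,n},\widehat\rho_{k,n}>0$ satisfy $\rho_{k,n},\widehat\rho_{k,n}\le1/b_\epsilon$. Belief vectors $\mu_{k,n},\widehat\mu_{k,n}$ are probability vectors over a finite state set (so Euclidean norms are at most 1). Define $F_{k,0}=0$, $F_{k,n}=1+\gamma\rho_{k,n-1}F_{k,n-1}$, $M_{k,n}=\lambda+(1-\lambda)F_{k,n}$, $e_{k,-1}=0$, $e_{k,n}=\gamma\lambda e_{k,n-1}+M_{k,n}\mu_{k,n}$; the hatted quantities $\widehat F,\widehat M,\widehat e$ are defined identically with $\widehat\rho,\widehat\mu$ in place of $\rho,\mu$. $\|\cdot\|$ is the Euclidean norm. *)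

theory Defs
  imports "HOL-Analysis.Analysis"
begin

fun Ftr :: "real \<Rightarrow> (nat \<Rightarrow> real) \<Rightarrow> nat \<Rightarrow> real" where
  "Ftr \<gamma> \<rho> 0 = 0"
| "Ftr \<gamma> \<rho> (Suc n) = 1 + \<gamma> * \<rho> n * Ftr \<gamma> \<rho> n"

definition Mtr :: "real \<Rightarrow> real \<Rightarrow> (nat \<Rightarrow> real) \<Rightarrow> nat \<Rightarrow> real" where
  "Mtr lam \<gamma> \<rho> n = lam + (1 - lam) * Ftr \<gamma> \<rho> n"

text \<open>Eligibility trace: e_{-1} = 0, e_n = gamma lambda e_{n-1} + M_n mu_n.
  Here etr ... n denotes e_n for n >= 0 (the base e_{-1} = 0 is built in).\<close>
fun etr :: "real \<Rightarrow> real \<Rightarrow> (nat \<Rightarrow> real) \<Rightarrow> (nat \<Rightarrow> real ^ 's) \<Rightarrow> nat \<Rightarrow> real ^ 's" where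
  "etr lam \<gamma> \<rho> \<mu> 0 = Mtr lam \<gamma> \<rho> 0 *\<^sub>R \<mu> 0"
| "etr lam \<gamma> \<rho> \<mu> (Suc n) = (\<gamma> * lam) *\<^sub>R etr lam \<gamma> \<rho> \<mu> n + Mtr lam \<gamma> \<rho> (Suc n) *\<^sub>R \<mu> (Suc n)"

definition prob_vec :: "real ^ 's \<Rightarrow> bool" where
  "prob_vec v \<longleftrightarrow> (\<forall>i. v $ i \<ge> 0) \<and> (\<Sum>i\<in>UNIV. v $ i) = 1"

end

theory Submission
  imports Defs
begin

lemma F_bound:
  assumes "0 < \<gamma>" "0 < b" "\<gamma> < b" "\<And>n. 0 < \<rho> n \<and> \<rho> n \<le> 1 / b"
  shows "0 \<le> Ftr \<gamma> \<rho> n \<and> Ftr \<gamma> \<rho> n \<le> 1 / (1 - \<gamma> / b)"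
proof (induction n)
  case 0
  have "\<gamma> / b < 1" using assms by simp
  then show ?case by simp
next
  case (Suc n)
  define q where "q = \<gamma> / b"
  have q: "0 < q" "q < 1" using assms by (auto simp: q_def)
  have r: "0 < \<rho> n" "\<gamma> * \<rho> n \<le> q" using assms(4)[of n] assms
    by (auto simp: q_def divide_simps mult.commute)
  have F: "0 \<le> Ftr \<gamma> \<rho> n" "Ftr \<gamma> \<rho> n \<le> 1/(1-q)" using Suc by (auto simp: q_def)
  have "\<gamma> * \<rho> n * Ftr \<gamma> \<rho> n \<le> q * (1/(1-q))"
    using F r q assms(1) by (intro mult_mono) auto
  moreover have "1 + q * (1/(1-q)) = 1/(1-q)" using q by (simp add: field_simps)
  moreover have "0 \<le> \<gamma> * \<rho> n * Ftr \<gamma> \<rho> n" using F r assms(1) by simp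
  ultimately show ?case by (simp add: q_def)
qed

lemma prob_norm: "prob_vec (v::real^'s::finite) \<Longrightarrow> norm v \<le> 1"
proof -
  assume p: "prob_vec v"
  have "norm v \<le> (\<Sum>i\<in>UNIV. \<bar>v $ i\<bar>)" by (rule norm_le_l1_cart)
  also have "\<dots> = (\<Sum>i\<in>UNIV. v $ i)" using p by (simp add: prob_vec_def)
  also have "\<dots> = 1" using p by (simp add: prob_vec_def)
  finally show ?thesis .
qed

lemma e_bound:
  assumes "0 < lam" "lam < 1" "0 < \<gamma>" "\<gamma> < 1" "0 < b" "\<gamma> < b"
    and "\<And>n. 0 < \<rho> n \<and> \<rho> n \<le> 1 / b"
    and "\<And>n. prob_vec ((\<mu>::nat \<Rightarrow> real^'s::finite) n)"
  shows "norm (etr lam \<gamma> \<rho> \<mu> n) \<le> 1 / (1 - lam * \<gamma>) * (lam + (1 - lam) / (1 - \<gamma> / b))"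
proof -
  define C where "C = lam + (1 - lam) / (1 - \<gamma> / b)"
  have M: "0 \<le> Mtr lam \<gamma> \<rho> m \<and> Mtr lam \<gamma> \<rho> m \<le> C" for m
  proof -
    have F: "0 \<le> Ftr \<gamma> \<rho> m" "Ftr \<gamma> \<rho> m \<le> 1 / (1 - \<gamma> / b)"
      using F_bound[of \<gamma> b \<rho> m] assms by auto
    have "(1 - lam) * Ftr \<gamma> \<rho> m \<le> (1 - lam) * (1 / (1 - \<gamma> / b))"
      using F assms by (intro mult_left_mono) auto
    then show ?thesis using F assms by (simp add: Mtr_def C_def)
  qed
  have Mm: "norm (Mtr lam \<gamma> \<rho> m *\<^sub>R \<mu> m) \<le> C" for m
  proof -
    have "norm (Mtr lam \<gamma> \<rho> m *\<^sub>R \<mu> m) = Mtr lam \<gamma> \<rho> m * norm (\<mu> m)" using M[of m] by simp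
    also have "\<dots> \<le> Mtr lam \<gamma> \<rho> m * 1" using M[of m] prob_norm[OF assms(8)[of m]]
      by (intro mult_left_mono) auto
    finally show ?thesis using M[of m] by simp
  qed
  have lg: "0 < lam * \<gamma>" "lam * \<gamma> < 1" using assms
    by (auto intro: mult_strict_mono[of lam 1 \<gamma> 1, simplified])
  have C0: "0 \<le> C" using M[of 0] by simp
  have "norm (etr lam \<gamma> \<rho> \<mu> n) \<le> C / (1 - lam * \<gamma>)"
  proof (induction n)
    case 0
    have "C \<le> C / (1 - lam * \<gamma>)" using lg C0 by (simp add: field_simps mult_left_le)
    then show ?case using Mm[of 0] by simp
  next
    case (Suc n)
    have "norm (etr lam \<gamma> \<rho> \<mu> (Suc n)) \<le> norm ((\<gamma> * lam) *\<^sub>R etr lam \<gamma> \<rho> \<mu> n) + C"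
      using Mm[of "Suc n"] norm_triangle_ineq[of "(\<gamma> * lam) *\<^sub>R etr lam \<gamma> \<rho> \<mu> n" "Mtr lam \<gamma> \<rho> (Suc n) *\<^sub>R \<mu> (Suc n)"]
      by (simp del: norm_scaleR)
    also have "norm ((\<gamma> * lam) *\<^sub>R etr lam \<gamma> \<rho> \<mu> n) \<le> (lam * \<gamma>) * (C / (1 - lam * \<gamma>))"
    proof -
      have "norm ((\<gamma> * lam) *\<^sub>R etr lam \<gamma> \<rho> \<mu> n) = (lam * \<gamma>) * norm (etr lam \<gamma> \<rho> \<mu> n)"
        using lg by (simp add: mult.commute)
      also have "\<dots> \<le> (lam * \<gamma>) * (C / (1 - lam * \<gamma>))"
        using Suc lg by (intro mult_left_mono) auto
      finally show ?thesis .
    qed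
    also have "(lam * \<gamma>) * (C / (1 - lam * \<gamma>)) + C = C / (1 - lam * \<gamma>)"
      using lg by (simp add: field_simps)
    finally show ?case by simp
  qed
  then show ?thesis by (simp add: C_def)
qed

theorem lemma2:
  fixes lam \<gamma> b\<^sub>\<epsilon> :: real
    and \<rho> \<rho>h :: "'k \<Rightarrow> nat \<Rightarrow> real"
    and \<mu> \<mu>h :: "'k \<Rightarrow> nat \<Rightarrow> real ^ 's::finite"
  assumes "0 < lam" "lam < 1" "0 < \<gamma>" "\<gamma> < 1" "0 < b\<^sub>\<epsilon>" "\<gamma> < b\<^sub>\<epsilon>"
    and "\<And>k n. 0 < \<rho> k n \<and> \<rho> k n \<le> 1 / b\<^sub>\<epsilon>"
    and "\<And>k n. 0 < \<rho>h k n \<and> \<rho>h k n \<le> 1 / b\<^sub>\<epsilon>"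
    and "\<And>k n. prob_vec (\<mu> k n)"
    and "\<And>k n. prob_vec (\<mu>h k n)"
  shows "\<forall>k n.
     norm (etr lam \<gamma> (\<rho> k) (\<mu> k) n)
       \<le> 1 / (1 - lam * \<gamma>) * (lam + (1 - lam) / (1 - \<gamma> / b\<^sub>\<epsilon>))
   \<and> norm (etr lam \<gamma> (\<rho>h k) (\<mu>h k) n)
       \<le> 1 / (1 - lam * \<gamma>) * (lam + (1 - lam) / (1 - \<gamma> / b\<^sub>\<epsilon>))"
proof (intro allI conjI)
  fix k n
  show "norm (etr lam \<gamma> (\<rho> k) (\<mu> k) n)
       \<le> 1 / (1 - lam * \<gamma>) * (lam + (1 - lam) / (1 - \<gamma> / b\<^sub>\<epsilon>))"
    by (rule e_bound[OF assms(1-6)]) (use assms in auto)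
  show "norm (etr lam \<gamma> (\<rho>h k) (\<mu>h k) n)
       \<le> 1 / (1 - lam * \<gamma>) * (lam + (1 - lam) / (1 - \<gamma> / b\<^sub>\<epsilon>))"
    by (rule e_bound[OF assms(1-6)]) (use assms in auto)
qed

end
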